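(* Let $\mathcal{C}$ be a covering of a finite set $E$ and $SH(X)=\bigcup\{K\in\mathcal{C}:K\cap X\neq\emptyset\}$ for $X\subseteq E$. Then $SH(SH(X))=SH(X)$ for all $X\subseteq E$ if and only if $\{I(x):x\in E\}$ forms a partition of $E$, where $I(x)=\bigcup\{K\in\mathcal{C}:x\in K\}$.
   Context: A covering of $E$ is a family of nonempty subsets of $E$ with union $E$. "$\{I(x):x\in E\}$ forms a partition" means the distinct sets among the $I(x)$ are pairwise disjoint (their union is $E$ since $x\in I(x)$). *)

theory Defs
  imports Main
begin

definition covering :: "'a set set \<Rightarrow> 'a set \<Rightarrow> bool" where
  "covering C E \<longleftrightarrow> (\<forall>K\<in>C. K \<noteq> {} \<and> K \<subseteq> E) \<and> \<Union>C = E"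

definition SH :: "'a set set \<Rightarrow> 'a set \<Rightarrow> 'a set" where
  "SH C X = \<Union>{K\<in>C. K \<inter> X \<noteq> {}}"

definition I :: "'a set set \<Rightarrow> 'a \<Rightarrow> 'a set" where
  "I C x = \<Union>{K\<in>C. x \<in> K}"

end

theory Submission
  imports Defs
begin
lemma SH_mem: "w \<in> SH C X \<longleftrightarrow> (\<exists>K\<in>C. w \<in> K \<and> (\<exists>x\<in>X. x \<in> K))"
  unfolding SH_def by auto
lemma I_mem: "w \<in> I C x \<longleftrightarrow> (\<exists>K\<in>C. w \<in> K \<and> x \<in> K)"
  unfolding I_def by auto
lemma SHI: "SH C {y} = I C y" by (auto simp: SH_mem I_mem)
lemma SH_incr: "SH C X \<subseteq> SH C (SH C X)"
proof
  fix w assume "w \<in> SH C X"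
  then obtain K x where K: "K \<in> C" "w \<in> K" "x \<in> X" "x \<in> K" by (auto simp: SH_mem)
  hence "x \<in> SH C X" by (auto simp: SH_mem)
  thus "w \<in> SH C (SH C X)" unfolding SH_mem[of w] using K by blast
qed

theorem proposition10:
  fixes E :: "'a set" and C :: "'a set set"
  assumes "finite E" and "covering C E"
  shows "(\<forall>X. X \<subseteq> E \<longrightarrow> SH C (SH C X) = SH C X) \<longleftrightarrow>
         (\<forall>x\<in>E. \<forall>y\<in>E. I C x = I C y \<or> I C x \<inter> I C y = {})"
proof
  have sub: "\<And>K. K \<in> C \<Longrightarrow> K \<subseteq> E" using assms(2) by (auto simp: covering_def)
  have SHE: "SH C X \<subseteq> E" for X using sub unfolding SH_def by blast
  assume H: "\<forall>X. X \<subseteq> E \<longrightarrow> SH C (SH C X) = SH C X"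
  have key: "I C x \<subseteq> I C y" if "z \<in> I C x" "z \<in> I C y" "y \<in> E" for x y z
  proof
    fix w assume "w \<in> I C x"
    then obtain K where K: "K \<in> C" "x \<in> K" "w \<in> K" by (auto simp: I_mem)
    from that(1) obtain K' where K': "K' \<in> C" "x \<in> K'" "z \<in> K'" by (auto simp: I_mem)
    have e: "SH C (SH C {y}) = SH C {y}" using H \<open>y \<in> E\<close> by blast
    have zy: "z \<in> SH C {y}" using that(2) by (simp add: SHI)
    have "x \<in> SH C (SH C {y})" unfolding SH_mem[of x] using K' zy by blast
    hence "x \<in> SH C {y}" using e by simp
    hence "w \<in> SH C (SH C {y})" unfolding SH_mem[of w] using K by blast
    thus "w \<in> I C y" using e by (simp add: SHI)
  qed
  show "\<forall>x\<in>E. \<forall>y\<in>E. I C x = I C y \<or> I C x \<inter> I C y = {}"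
    by (metis Int_emptyI key subset_antisym)
next
  have sub: "\<And>K. K \<in> C \<Longrightarrow> K \<subseteq> E" using assms(2) by (auto simp: covering_def)
  assume P: "\<forall>x\<in>E. \<forall>y\<in>E. I C x = I C y \<or> I C x \<inter> I C y = {}"
  show "\<forall>X. X \<subseteq> E \<longrightarrow> SH C (SH C X) = SH C X"
  proof (intro allI impI equalityI)
    fix X assume "X \<subseteq> E"
    show "SH C X \<subseteq> SH C (SH C X)" by (rule SH_incr)
    show "SH C (SH C X) \<subseteq> SH C X"
    proof
      fix w assume "w \<in> SH C (SH C X)"
      then obtain K u where K: "K \<in> C" "w \<in> K" "u \<in> K" "u \<in> SH C X" by (auto simp: SH_mem)
      then obtain K' x where K': "K' \<in> C" "u \<in> K'" "x \<in> K'" "x \<in> X" by (auto simp: SH_mem)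
      have wE: "w \<in> E" "x \<in> E" using K K' sub by auto
      have u: "u \<in> I C x" "u \<in> I C w" using K K' by (auto simp: I_mem)
      hence "I C x = I C w" using P wE by blast
      moreover have "w \<in> I C w" using K by (auto simp: I_mem)
      ultimately have "w \<in> I C x" by simp
      then obtain K'' where "K'' \<in> C" "x \<in> K''" "w \<in> K''" by (auto simp: I_mem)
      thus "w \<in> SH C X" using K'(4) by (auto simp: SH_mem)
    qed
  qed
qed
end
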